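(* If $n$ is an odd integer, then $$\sum_{k=1}^\infty\frac{L_n^{2k}}{F_n^{2k}5^k(2k-1)(2k)(2k+1)}=\ln 2-\frac12\ln 5-\ln(F_n)+\frac{n}{\sqrt5}\,\frac{L_{2n}}{F_{2n}}\ln\alpha-\frac12.$$
   Context: $F_n$ and $L_n$ are the Fibonacci and Lucas numbers: $F_0=0,F_1=1$, $L_0=2,L_1=1$, and both satisfy $X_n=X_{n-1}+X_{n-2}$ (extended to all $n\in\mathbb Z$); equivalently $F_n=(\alpha^n-\beta^n)/(\alpha-\beta)$, $L_n=\alpha^n+\beta^n$ with $\alpha=(1+\sqrt5)/2$, $\beta=(1-\sqrt5)/2$. *)

theory Defs
  imports Complex_Main
begin

definition fib_alpha :: real where "fib_alpha = (1 + sqrt 5) / 2"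
definition fib_beta :: real where "fib_beta = (1 - sqrt 5) / 2"

definition F :: "int \<Rightarrow> real" where
  "F n = (fib_alpha powi n - fib_beta powi n) / (fib_alpha - fib_beta)"
definition L :: "int \<Rightarrow> real" where
  "L n = fib_alpha powi n + fib_beta powi n"

end

theory Submission
  imports Defs "HOL-Analysis.Analysis"
begin

lemma alpha_pos: "fib_alpha > 1"
proof -
  have "sqrt 5 > 1" by (simp add: real_less_rsqrt)
  thus ?thesis by (simp add: fib_alpha_def)
qed

lemma beta_eq: "fib_beta = - inverse fib_alpha"
proof -
  have s: "sqrt 5 * sqrt 5 = (5::real)" by simp
  have e: "(1 + sqrt 5) * (1 - sqrt 5) = 1 - sqrt 5 * sqrt (5::real)" by (simp only: ring_distribs)
  have "fib_alpha * fib_beta = ((1 + sqrt 5) * (1 - sqrt 5)) / 4"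
    unfolding fib_alpha_def fib_beta_def by simp
  also have "\<dots> = -1" unfolding e s by simp
  finally have m: "fib_alpha * fib_beta = -1" .
  have "fib_alpha \<noteq> 0" using alpha_pos by simp
  with m show ?thesis by (simp add: field_simps)
qed

lemma diff_ab: "fib_alpha - fib_beta = sqrt 5"
  by (simp add: fib_alpha_def fib_beta_def field_simps)

lemma minus_one_odd: "odd (n::int) \<Longrightarrow> (-1::real) powi n = -1"
proof -
  assume "odd n"
  then obtain j where j: "n = 2*j+1" by (meson oddE)
  have "(-1::real) powi (2*j+1) = ((-1) powi 2) powi j * (-1)"
    by (simp add: power_int_add power_int_mult)
  thus ?thesis using j by simp
qed

lemma ln_powi: "(x::real) > 0 \<Longrightarrow> ln (x powi n) = real_of_int n * ln x"
  by (metis ln_powr powr_real_of_int' less_imp_le less_irrefl)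

lemma aux2: fixes c :: real assumes "c > 0" "c \<noteq> 1"
  shows "(c + inverse c)/(c - inverse c) = (c*c+1)/((c+1)*(c-1))"
proof -
  have h1: "c - 1 \<noteq> 0" "c + 1 \<noteq> 0" "c \<noteq> 0" using assms by auto
  have h2: "c - inverse c = (c+1)*(c-1)/c" using h1 by (simp add: field_simps)
  have h3: "c + inverse c = (c*c+1)/c" using h1 by (simp add: field_simps)
  show ?thesis unfolding h2 h3 using h1 by simp
qed
lemma aux3: fixes c :: real assumes "c > 0" "c \<noteq> 1"
  shows "(((c-1)/(c+1)) + 1/((c-1)/(c+1)))/2 = (c*c+1)/((c+1)*(c-1))"
proof -
  have h1: "c - 1 \<noteq> 0" "c + 1 \<noteq> 0" "c \<noteq> 0" using assms by auto
  have e: "c*c - 1 = (c+1)*(c-1)" by (simp add: algebra_simps)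
  have h7a: "c*c - 1 \<noteq> 0" unfolding e using h1 by simp
  have e2: "c * (c * 2) - 2 = 2 * (c*c - 1)" by (simp add: algebra_simps)
  have h7b: "c * (c * 2) - 2 \<noteq> 0" unfolding e2 using h7a by simp
  note h7 = h7a h7b
  show ?thesis using h1 h7 by (simp add: field_simps)
qed

lemma fin_aux:
  fixes P R T Q l2 la lb l5 :: real
  assumes "P + R = T - 1/2" "Q = T"
  shows "P + 1/2*(2*l2 + 2*la - 2*lb) + R = l2 - l5/2 - (lb - la - l5/2) + Q - 1/2"
proof -
  have "1/2*(2*l2 + 2*la - 2*lb) = l2 + la - lb" by simp
  thus ?thesis using assms by linarith
qed

theorem theorem11:
  fixes n :: int
  assumes "odd n"
  shows "(\<lambda>m. let k = Suc m in
            L n ^ (2 * k) / (F n ^ (2 * k) * 5 ^ k * ((2 * real k - 1) * (2 * real k) * (2 * real k + 1))))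
         sums (ln 2 - ln 5 / 2 - ln (F n) + (real_of_int n / sqrt 5) * (L (2 * n) / F (2 * n)) * ln fib_alpha - 1 / 2)"
proof -
  define a where "a = fib_alpha powi n"
  have apos: "a > 0" using alpha_pos by (simp add: a_def)
  have an1: "a \<noteq> 1"
  proof
    assume "a = 1"
    hence "ln a = 0" by simp
    moreover have "ln a = real_of_int n * ln fib_alpha" using alpha_pos by (simp add: a_def ln_powi)
    moreover have "n \<noteq> 0" using assms by auto
    moreover have "ln fib_alpha > 0" using alpha_pos by simp
    ultimately show False by simp
  qed
  have lna: "ln a = real_of_int n * ln fib_alpha" using alpha_pos by (simp add: a_def ln_powi)
  have bn: "fib_beta powi n = - inverse a"
  proof -
    have "fib_beta powi n = (-1) powi n * (inverse fib_alpha) powi n"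
      unfolding beta_eq by (rule power_int_minus_left_distrib) simp
    also have "\<dots> = - inverse a"
      using minus_one_odd[OF assms] by (simp add: a_def power_int_inverse)
    finally show ?thesis .
  qed
  have b2n: "fib_beta powi (2*n) = inverse a ^ 2"
    by (metis bn power_int_mult power_int_mult_numeral mult.commute power2_minus power_int_numeral)
  have a2n: "fib_alpha powi (2*n) = a ^ 2"
    by (metis a_def power_int_mult mult.commute power_int_numeral)
  have s5: "sqrt 5 > 0" by simp
  have Fn: "F n = (a + inverse a) / sqrt 5" by (simp add: F_def diff_ab bn a_def)
  have Ln: "L n = a - inverse a" by (simp add: L_def bn a_def)
  have F2n: "F (2*n) = (a^2 - inverse a ^ 2) / sqrt 5" by (simp add: F_def diff_ab b2n a2n)
  have L2n: "L (2*n) = a^2 + inverse a ^ 2" by (simp add: L_def b2n a2n)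
  define x where "x = (a^2 - 1) / (a^2 + 1)"
  have xL: "x = L n / (F n * sqrt 5)" using apos
  proof -
    have "L n / (F n * sqrt 5) = (a - inverse a) / (a + inverse a)" using s5 by (simp add: Fn Ln)
    also have "\<dots> = (a * (a - inverse a)) / (a * (a + inverse a))" using apos by simp
    also have "\<dots> = x" using apos by (simp add: x_def algebra_simps power2_eq_square)
    finally show ?thesis ..
  qed
  have ax: "\<bar>x\<bar> < 1"
  proof -
    have p: "a^2 + 1 > 0" using zero_le_power2[of a] by linarith
    have "\<bar>a^2 - 1\<bar> < a^2 + 1" using apos by (simp add: abs_less_iff)
    moreover have "\<bar>x\<bar> = \<bar>a^2 - 1\<bar> / (a^2 + 1)"
      by (simp only: x_def abs_divide abs_of_pos[OF p])
    ultimately show ?thesis by (metis divide_less_eq_1_pos p)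
  qed
  have x0: "x \<noteq> 0"
  proof -
    have "a^2 \<noteq> 1" using apos an1 by (auto simp add: power2_eq_1_iff)
    moreover have "a^2 + 1 \<noteq> 0" using zero_le_power2[of a] by linarith
    ultimately show ?thesis by (simp add: x_def)
  qed
  define f where "f = (\<lambda>m::nat. 2 * x ^ (2*m+1) / real (2*m+1))"
  have S1: "f sums (2 * ln a)"
  proof -
    have h: "(\<lambda>m. 2 * ((a^2 - 1) / (a^2 + 1)) ^ (2*m+1) / of_nat (2*m+1)) sums ln (a^2)"
      by (rule ln_series_quadratic) (use apos in simp)
    have l2: "ln (a^2) = 2 * ln a" using apos by (simp add: ln_realpow)
    show ?thesis unfolding f_def x_def l2[symmetric] by (rule h)
  qed
  have f0: "f 0 = 2 * x" by (simp add: f_def)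
  have S1': "(\<lambda>m. f (Suc m)) sums (2 * ln a - 2 * x)"
    using sums_Suc_iff[of f "2 * ln a - 2 * x"] S1 f0 by simp
  define g where "g = (\<lambda>n::nat. - ((x^2)^n) / real n)"
  have S2: "(\<lambda>m. g (Suc m)) sums ln (1 - x^2)"
  proof -
    have x2: "x^2 < 1" using ax by (simp add: abs_square_less_1)
    have "\<bar>-(x^2)\<bar> < 1" using x2 by simp
    from ln_series'[OF this] have "g sums ln (1 - x^2)" by (simp add: g_def)
    moreover have "g 0 = 0" by (simp add: g_def)
    ultimately show ?thesis using sums_Suc_iff[of g "ln (1 - x^2)"] by simp
  qed
  have S: "(\<lambda>m. (x/4) * f m + (1/2) * g (Suc m) + (1/(4*x)) * f (Suc m))
          sums ((x/4) * (2 * ln a) + (1/2) * ln (1 - x^2) + (1/(4*x)) * (2 * ln a - 2 * x))"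
    using sums_add[OF sums_add[OF sums_mult[OF S1, of "x/4"] sums_mult[OF S2, of "1/2"]] sums_mult[OF S1', of "1/(4*x)"]] .
  have Fpos: "F n > 0" unfolding Fn using apos by (intro divide_pos_pos add_pos_pos) auto
  have a21: "a^2 + 1 > 0" using zero_le_power2[of a] by linarith
  have a2m: "a^2 - 1 \<noteq> 0" using apos an1 by (auto simp add: power2_eq_1_iff)
  have tm: "(let k = Suc m in
            L n ^ (2 * k) / (F n ^ (2 * k) * 5 ^ k * ((2 * real k - 1) * (2 * real k) * (2 * real k + 1))))
      = (x/4) * f m + (1/2) * g (Suc m) + (1/(4*x)) * f (Suc m)" for m
  proof -
    define y where "y = x ^ (2 * Suc m)"
    have p5: "sqrt 5 ^ (2 * Suc m) = (5::real) ^ Suc m"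
      by (simp only: power_mult) simp
    have xk: "L n ^ (2*Suc m) / (F n ^ (2*Suc m) * 5 ^ Suc m) = y"
      unfolding y_def xL power_divide power_mult_distrib p5 ..
    have e1: "x * x ^ (2*m+1) = y" by (simp add: y_def)
    have e2: "x ^ (2*Suc m+1) = x * y" by (simp add: y_def)
    have e3: "(x^2) ^ Suc m = y" by (simp only: y_def power_mult)
    have "(let k = Suc m in
            L n ^ (2 * k) / (F n ^ (2 * k) * 5 ^ k * ((2 * real k - 1) * (2 * real k) * (2 * real k + 1))))
        = y / ((2 * real m + 1) * (2 * real m + 2) * (2 * real m + 3))"
    proof -
      have "(let k = Suc m in
            L n ^ (2 * k) / (F n ^ (2 * k) * 5 ^ k * ((2 * real k - 1) * (2 * real k) * (2 * real k + 1))))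
          = (L n ^ (2*Suc m) / (F n ^ (2*Suc m) * 5 ^ Suc m)) / ((2 * real (Suc m) - 1) * (2 * real (Suc m)) * (2 * real (Suc m) + 1))"
        by (simp add: Let_def)
      also have "\<dots> = y / ((2 * real m + 1) * (2 * real m + 2) * (2 * real m + 3))"
        unfolding xk by (simp add: algebra_simps)
      finally show ?thesis .
    qed
    also have "\<dots> = (x/4) * f m + (1/2) * g (Suc m) + (1/(4*x)) * f (Suc m)"
    proof -
      have A: "(x/4) * f m = y / (2 * (2 * real m + 1))"
        unfolding f_def using e1 by (simp add: field_simps)
      have B: "(1/2) * g (Suc m) = - y / (2 * real m + 2)"
        unfolding g_def using e3 by (simp add: field_simps)
      have C: "(1/(4*x)) * f (Suc m) = y / (2 * (2 * real m + 3))"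
        unfolding f_def using e2 x0 by (simp add: field_simps)
      have D: "y / ((2 * real m + 1) * (2 * real m + 2) * (2 * real m + 3))
          = y / (2 * (2 * real m + 1)) + - y / (2 * real m + 2) + y / (2 * (2 * real m + 3))"
      proof -
        define r where "r = real m"
        have r0: "r \<ge> 0" by (simp add: r_def)
        have d1: "2 * r + 1 \<noteq> 0" "2 * r + 2 \<noteq> 0" "2 * r + 3 \<noteq> 0" using r0 by linarith+
        have "y / ((2 * r + 1) * (2 * r + 2) * (2 * r + 3))
          = y / (2 * (2 * r + 1)) + - y / (2 * r + 2) + y / (2 * (2 * r + 3))"
          using d1 by (simp add: divide_simps) (simp add: algebra_simps)
        thus ?thesis by (simp add: r_def)
      qed
      show ?thesis unfolding A B C D ..
    qed
    finally show ?thesis .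
  qed
  have c1: "ln (1 - x^2) = 2 * ln 2 + 2 * ln a - 2 * ln (a^2 + 1)"
  proof -
    have "1 - x^2 = (2 * a)^2 / (a^2 + 1)^2"
      unfolding x_def using a21 by (simp add: field_simps) (simp add: algebra_simps power2_eq_square)
    hence "ln (1 - x^2) = ln ((2 * a)^2) - ln ((a^2 + 1)^2)"
      using apos a21 by (simp add: ln_div)
    also have "\<dots> = 2 * ln (2 * a) - 2 * ln (a^2 + 1)"
    proof -
      have pos1: "2 * a > 0" using apos by simp
      show ?thesis by (simp only: ln_realpow)
    qed
    also have "ln (2 * a) = ln 2 + ln a" using apos by (simp add: ln_mult)
    finally show ?thesis by simp
  qed
  have c2: "ln (F n) = ln (a^2 + 1) - ln a - ln 5 / 2"
  proof -
    have "F n = (a^2 + 1) / (a * sqrt 5)" using apos by (simp add: Fn field_simps power2_eq_square)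
    hence "ln (F n) = ln (a^2 + 1) - ln (a * sqrt 5)" using apos a21 by (simp add: ln_div)
    also have "ln (a * sqrt 5) = ln a + ln 5 / 2" using apos by (simp add: ln_mult ln_sqrt)
    finally show ?thesis by simp
  qed
  have c3: "(x + 1 / x) / 2 = L (2 * n) / (F (2 * n) * sqrt 5)"
  proof -
    have "L (2 * n) / (F (2 * n) * sqrt 5) = (a^2 + inverse a ^ 2) / (a^2 - inverse a ^ 2)"
      using s5 by (simp add: L2n F2n)
    also have "\<dots> = (a^2 * a^2 + 1) / ((a^2 + 1) * (a^2 - 1))"
      unfolding power_inverse by (rule aux2) (use apos a2m in auto)
    also have "\<dots> = (x + 1 / x) / 2"
      unfolding x_def by (rule aux3[symmetric]) (use apos a2m in auto)
    finally show ?thesis ..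
  qed
  have val: "(x/4) * (2 * ln a) + (1/2) * ln (1 - x^2) + (1/(4*x)) * (2 * ln a - 2 * x)
     = ln 2 - ln 5 / 2 - ln (F n) + (real_of_int n / sqrt 5) * (L (2 * n) / F (2 * n)) * ln fib_alpha - 1 / 2"
  proof -
    have H1: "(x/4) * (2 * ln a) + (1/(4*x)) * (2 * ln a - 2 * x) = ((x + 1 / x) / 2) * ln a - 1/2"
      using x0 by (simp add: field_simps)
    have H2: "(real_of_int n / sqrt 5) * (L (2 * n) / F (2 * n)) * ln fib_alpha
        = (L (2 * n) / (F (2 * n) * sqrt 5)) * ln a"
      unfolding lna by (simp add: mult_ac)
    show ?thesis unfolding c1 c2 by (rule fin_aux[OF H1[unfolded c3] H2])
  qed
  show ?thesis using S[unfolded tm[symmetric] val] .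
qed

end
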